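(* Let $k\ge 4$ be an integer, let $t$ be a positive integer divisible by $\operatorname{lcm}(2,3,\ldots,2k-1)$, and let $n$ be an integer with $k^2-k \le n \le 4k^2-10k+5$. Suppose $S$ is a $k$-bounded zero-sum sequence of length $|S|=t+n$ that is $t$-avoiding, and let $\alpha>0$, $\beta>0$ be integers with $v_\alpha(S)\ge \frac{k}{k+1}n$ and $v_{-\beta}(S)\ge\frac{k}{k+1}n$. Let $g=\gcd(\alpha,\beta)$ and let $X$ be the sequence consisting of $\beta/g$ copies of $\alpha$ and $\alpha/g$ copies of $-\beta$. Then for every $N\in\mathbb N$, the sequence $S'$ obtained by adjoining $N$ copies of $X$ to $S$ (i.e. $S\cdot X^{[N]}$) has no zero-sum subsequence of length exactly $n$.
   Context: A sequence is a finite multiset of integers; $|S|$ is its length counted with multiplicity, $v_a(S)$ is the multiplicity of $a$ in $S$, and a subsequence is a sub-multiset. $S$ is zero-sum if the sum of its terms is $0$, and $k$-bounded if all terms lie in $[-k,k]$. A zero-sum sequence is $t$-avoiding if it has no zero-sum subsequence of length exactly $t$. $S\cdot X^{[N]}$ denotes the concatenation (multiset union) of $S$ with $N$ copies of $X$. *)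

theory Defs
  imports Main "HOL-Library.Multiset"
begin

text \<open>Sequences are finite multisets of integers.\<close>

definition zero_sum :: "int multiset \<Rightarrow> bool" where
  "zero_sum S \<longleftrightarrow> sum_mset S = 0"

definition k_bounded :: "int \<Rightarrow> int multiset \<Rightarrow> bool" where
  "k_bounded k S \<longleftrightarrow> (\<forall>a \<in># S. -k \<le> a \<and> a \<le> k)"

definition t_avoiding :: "nat \<Rightarrow> int multiset \<Rightarrow> bool" where
  "t_avoiding t S \<longleftrightarrow> zero_sum S \<and> \<not> (\<exists>T. T \<subseteq># S \<and> size T = t \<and> zero_sum T)"

end

theory Submission
  imports Defs
begin

lemma sum_lb: "(\<forall>x\<in>#A. -K \<le> x) \<Longrightarrow> sum_mset A \<ge> -K * int (size A)"
  for A :: "int multiset"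
  by (induction A) (auto simp: algebra_simps)

lemma sum_ub: "(\<forall>x\<in>#A. x \<le> K) \<Longrightarrow> sum_mset A \<le> K * int (size A)"
  for A :: "int multiset"
  by (induction A) (auto simp: algebra_simps)

lemma split_val: "sum_mset T = int (count T a) * a + sum_mset (filter_mset (\<lambda>x. x \<noteq> a) T)
   \<and> size (filter_mset (\<lambda>x. x \<noteq> a) T) = size T - count T a"
  for T :: "int multiset"
proof -
  have e: "T = filter_mset (\<lambda>x. x = a) T + filter_mset (\<lambda>x. x \<noteq> a) T"
    by (simp add: multiset_partition[symmetric])
  have r: "filter_mset (\<lambda>x. x = a) T = replicate_mset (count T a) a"
    by (simp add: filter_eq_replicate_mset)
  have "sum_mset T = sum_mset (filter_mset (\<lambda>x. x = a) T) + sum_mset (filter_mset (\<lambda>x. x \<noteq> a) T)"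
    by (subst e) (rule sum_mset.union)
  moreover have "size T = count T a + size (filter_mset (\<lambda>x. x \<noteq> a) T)"
    by (subst e) (simp add: r)
  ultimately show ?thesis by (simp add: r sum_mset_replicate_mset)
qed

theorem lemma2p3:
  fixes k t n :: nat and S :: "int multiset" and \<alpha> \<beta> :: int
  assumes "k \<ge> 4"
    and "t > 0" and "Lcm {2..2*k-1} dvd t"
    and "k^2 - k \<le> n" and "n \<le> 4*k^2 - 10*k + 5"
    and "k_bounded (int k) S" and "zero_sum S" and "size S = t + n"
    and "t_avoiding t S"
    and "\<alpha> > 0" and "\<beta> > 0"
    and "(k+1) * count S \<alpha> \<ge> k * n"
    and "(k+1) * count S (-\<beta>) \<ge> k * n"
  shows "\<forall>N::nat. \<not> (\<exists>T. T \<subseteq>#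
           S + repeat_mset N (replicate_mset (nat (\<beta> div gcd \<alpha> \<beta>)) \<alpha>
                              + replicate_mset (nat (\<alpha> div gcd \<alpha> \<beta>)) (-\<beta>))
           \<and> size T = n \<and> zero_sum T)"
proof (intro allI notI)
  fix N
  define M where "M = repeat_mset N (replicate_mset (nat (\<beta> div gcd \<alpha> \<beta>)) \<alpha>
                              + replicate_mset (nat (\<alpha> div gcd \<alpha> \<beta>)) (-\<beta>))"
  assume "\<exists>T. T \<subseteq># S + repeat_mset N (replicate_mset (nat (\<beta> div gcd \<alpha> \<beta>)) \<alpha>
                              + replicate_mset (nat (\<alpha> div gcd \<alpha> \<beta>)) (-\<beta>))
           \<and> size T = n \<and> zero_sum T"
  then obtain T where T: "T \<subseteq># S + M" "size T = n" "zero_sum T" unfolding M_def by blast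
  have Mset: "\<And>x. x \<in># M \<Longrightarrow> x = \<alpha> \<or> x = -\<beta>"
    unfolding M_def by (induction N) (auto split: if_splits)
  have kn: "k * n > 0"
  proof -
    have "k^2 - k \<ge> 12"
    proof -
      have "k^2 = k * k" by (simp add: power2_eq_square)
      moreover have "k * k \<ge> 4 * k" using assms(1) by simp
      ultimately show ?thesis using assms(1) by linarith
    qed
    then have "n > 0" using assms(4) by linarith
    then show ?thesis using assms(1) by simp
  qed
  have ca: "count S \<alpha> > 0" using assms(12) kn by (metis gr0I le_zero_eq mult_0_right not_less)
  have cb: "count S (-\<beta>) > 0" using assms(13) kn by (metis gr0I le_zero_eq mult_0_right not_less)
  have Sb: "\<And>x. x \<in># S \<Longrightarrow> - int k \<le> x \<and> x \<le> int k" using assms(6) unfolding k_bounded_def by blast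
  have ab: "\<alpha> \<le> int k" using Sb[of \<alpha>] ca by simp
  have bb: "-\<beta> \<ge> - int k" using Sb[of "-\<beta>"] cb by simp
  have Tb: "\<And>x. x \<in># T \<Longrightarrow> - int k \<le> x \<and> x \<le> int k"
  proof -
    fix x assume "x \<in># T"
    then have "x \<in># S + M" using T(1) by (meson mset_subset_eqD)
    then show "- int k \<le> x \<and> x \<le> int k" using Sb Mset ab bb assms(10,11) by fastforce
  qed
  have sT: "sum_mset T = 0" using T(3) unfolding zero_sum_def .
  show False
  proof (cases "count T \<alpha> \<le> count S \<alpha> \<and> count T (-\<beta>) \<le> count S (-\<beta>)")
    case True
    have "T \<subseteq># S" unfolding subseteq_mset_def
    proof
      fix x
      show "count T x \<le> count S x"
      proof (cases "x = \<alpha> \<or> x = -\<beta>")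
        case True then show ?thesis using \<open>count T \<alpha> \<le> count S \<alpha> \<and> _\<close> by auto
      next
        case False
        then have "count M x = 0" using Mset by (meson count_eq_zero_iff)
        then show ?thesis using T(1) by (metis add.right_neutral count_union subseteq_mset_def)
      qed
    qed
    moreover have "S - T \<subseteq># S" by simp
    moreover have "size (S - T) = t" using \<open>T \<subseteq># S\<close> T(2) assms(8) by (simp add: size_Diff_submset)
    moreover have "zero_sum (S - T)"
    proof -
      have "S = T + (S - T)" using \<open>T \<subseteq># S\<close> by simp
      then have "sum_mset S = sum_mset T + sum_mset (S - T)" by (metis sum_mset.union)
      then show ?thesis using sT assms(7) unfolding zero_sum_def by simp
    qed
    ultimately show False using assms(9) unfolding t_avoiding_def by blast
  next
    case False
    then have "\<not> count T \<alpha> \<le> count S \<alpha> \<or> \<not> count T (-\<beta>) \<le> count S (-\<beta>)" by blast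
    then show False
    proof
      assume h: "\<not> count T \<alpha> \<le> count S \<alpha>"
      let ?c = "count T \<alpha>" let ?R = "filter_mset (\<lambda>x. x \<noteq> \<alpha>) T"
      have sp: "sum_mset T = int ?c * \<alpha> + sum_mset ?R" "size ?R = n - ?c"
        using split_val[of T \<alpha>] T(2) by auto
      have "?c \<le> n" using T(2) by (metis count_le_replicate_mset_subset_eq order_refl
            size_mset_mono size_replicate_mset)
      have "sum_mset ?R \<ge> - int k * int (size ?R)"
        by (rule sum_lb) (use Tb in auto)
      moreover have "int ?c * \<alpha> \<ge> int ?c" using assms(10) mult_left_mono[of 1 \<alpha> "int ?c"] by simp
      ultimately have "0 \<ge> int ?c - int k * (int n - int ?c)" using sp sT \<open>?c \<le> n\<close> by (simp add: of_nat_diff)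
      then have "int (k+1) * int ?c \<le> int k * int n" by (simp add: algebra_simps)
      then have "(k+1) * ?c \<le> k * n" by (metis of_nat_le_iff of_nat_mult)
      moreover have "(k+1) * count S \<alpha> < (k+1) * ?c" using h by (intro mult_strict_left_mono) auto
      ultimately show False using assms(12) by linarith
    next
      assume h: "\<not> count T (-\<beta>) \<le> count S (-\<beta>)"
      let ?c = "count T (-\<beta>)" let ?R = "filter_mset (\<lambda>x. x \<noteq> -\<beta>) T"
      have sp: "sum_mset T = int ?c * (-\<beta>) + sum_mset ?R" "size ?R = n - ?c"
        using split_val[of T "-\<beta>"] T(2) by auto
      have "?c \<le> n" using T(2) by (metis count_le_replicate_mset_subset_eq order_refl
            size_mset_mono size_replicate_mset)
      have "sum_mset ?R \<le> int k * int (size ?R)"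
        by (rule sum_ub) (use Tb in auto)
      moreover have "int ?c * \<beta> \<ge> int ?c" using assms(11) mult_left_mono[of 1 \<beta> "int ?c"] by simp
      ultimately have "0 \<le> - int ?c + int k * (int n - int ?c)" using sp sT \<open>?c \<le> n\<close> by (simp add: of_nat_diff)
      then have "int (k+1) * int ?c \<le> int k * int n" by (simp add: algebra_simps)
      then have "(k+1) * ?c \<le> k * n" by (metis of_nat_le_iff of_nat_mult)
      moreover have "(k+1) * count S (-\<beta>) < (k+1) * ?c" using h by (intro mult_strict_left_mono) auto
      ultimately show False using assms(13) by linarith
    qed
  qed
qed

end
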